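(* For all $a,b\in\mathbb{C}$ and every $c\in\mathbb{C}\setminus\{0\}$, the following identity of formal power series in $x$ holds: $$\bigl(M(1;a;b;x)\bigr)^{c}=M\!\left(1;\tfrac{a}{c};\tfrac{b}{c};cx\right).$$
   Context: For $m,a,b\in\mathbb{C}$ the master series is the formal power series $M(m;a;b;x)=m+x+\sum_{\ell\ge 2}\frac{x^\ell}{\ell!}\prod_{\gamma=1}^{\ell-1}(m-a\gamma+b\ell)$; $M(m;a;b;cx)$ denotes this series with $x$ replaced by $cx$. For a formal power series $f$ with constant term $1$ and $c\in\mathbb{C}$, $f^{c}:=\exp(c\log f)$. *)

theory Defs
  imports "HOL-Computational_Algebra.Formal_Power_Series"
begin

definition master :: "complex \<Rightarrow> complex \<Rightarrow> complex \<Rightarrow> complex fps" where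
  "master m a b = Abs_fps (\<lambda>l. if l = 0 then m else if l = 1 then 1
      else (\<Prod>g=1..l-1. m - a * of_nat g + b * of_nat l) / of_nat (fact l))"

text \<open>Formal logarithm of a series with constant term 1: log f = log(1 + (f-1)),
  i.e. the series ln(1+y) = sum_{n>=1} (-1)^(n-1) y^n / n composed with y = f - 1.\<close>
definition fps_log :: "complex fps \<Rightarrow> complex fps" where
  "fps_log f = fps_ln 1 oo (f - 1)"

definition fps_expo :: "complex fps \<Rightarrow> complex fps" where
  "fps_expo g = fps_exp 1 oo g"

definition fps_cpow :: "complex fps \<Rightarrow> complex \<Rightarrow> complex fps" where
  "fps_cpow f c = fps_expo (fps_const c * fps_log f)"

end

theory Submission imports Defs "HOL-Computational_Algebra.Polynomial" begin
unbundle fps_syntax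

definition Aco :: "complex \<Rightarrow> complex \<Rightarrow> nat \<Rightarrow> complex \<Rightarrow> complex" where
 "Aco a b n x = (if n = 0 then 1 else x * (\<Prod>g<n-1. x + b * of_nat n - a * of_nat (Suc g)) / fact n)"

lemma Aco_0 [simp]: "Aco a b 0 x = 1" by (simp add: Aco_def)
lemma Aco_at0: "n > 0 \<Longrightarrow> Aco a b n 0 = 0" by (simp add: Aco_def)

lemma Aco_diff: "Aco a b (Suc m) x - Aco a b (Suc m) (x - a) = a * Aco a b m (x + b - a)"
proof (cases m)
  case 0 then show ?thesis by (simp add: Aco_def)
next
  case (Suc k)
  define Q where "Q = (\<Prod>g<k. x + b * of_nat (Suc (Suc k)) - a * of_nat (Suc (Suc g)))"
  have p1: "(\<Prod>g<Suc k. x + b * of_nat (Suc (Suc k)) - a * of_nat (Suc g)) = (x + b * of_nat (Suc (Suc k)) - a) * Q"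
    unfolding Q_def by (subst prod.lessThan_Suc_shift) simp
  have p2: "(\<Prod>g<Suc k. (x - a) + b * of_nat (Suc (Suc k)) - a * of_nat (Suc g)) = Q * (x + b * of_nat (Suc (Suc k)) - a * of_nat (Suc (Suc k)))"
    unfolding Q_def by (subst prod.lessThan_Suc) (simp add: algebra_simps)
  have p3: "(\<Prod>g<k. (x + b - a) + b * of_nat (Suc k) - a * of_nat (Suc g)) = Q"
    unfolding Q_def by (intro prod.cong refl) (simp add: algebra_simps)
  have key: "x * (x + b * of_nat (Suc (Suc k)) - a) - (x - a) * (x + b * of_nat (Suc (Suc k)) - a * of_nat (Suc (Suc k)))
      = a * of_nat (Suc (Suc k)) * (x + b - a)"
    by (simp add: algebra_simps)
  have f: "(fact (Suc (Suc k)) :: complex) = of_nat (Suc (Suc k)) * fact (Suc k)"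
    by (simp del: of_nat_Suc)
  have e1: "Aco a b (Suc m) x = x * ((x + b * of_nat (Suc (Suc k)) - a) * Q) / fact (Suc (Suc k))"
    unfolding Aco_def using p1 Suc by simp
  have e2: "Aco a b (Suc m) (x - a) = (x - a) * (Q * (x + b * of_nat (Suc (Suc k)) - a * of_nat (Suc (Suc k)))) / fact (Suc (Suc k))"
    unfolding Aco_def using p2 Suc by simp
  have "Aco a b (Suc m) x - Aco a b (Suc m) (x - a)
     = (x * (x + b * of_nat (Suc (Suc k)) - a) - (x - a) * (x + b * of_nat (Suc (Suc k)) - a * of_nat (Suc (Suc k)))) * Q / fact (Suc (Suc k))"
    unfolding e1 e2 diff_divide_distrib[symmetric] by (simp add: algebra_simps)
  also have "\<dots> = a * ((x + b - a) * Q / fact (Suc k))"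
    unfolding key f by (simp add: field_simps del: of_nat_Suc fact_Suc)
  also have "\<dots> = a * Aco a b m (x + b - a)"
    unfolding Aco_def using p3 Suc by simp
  finally show ?thesis .
qed
definition AP :: "complex \<Rightarrow> complex \<Rightarrow> nat \<Rightarrow> complex poly" where
 "AP a b n = (if n = 0 then 1 else smult (1 / fact n) ([:0,1:] * (\<Prod>g<n-1. [: b * of_nat n - a * of_nat (Suc g), 1:])))"

lemma poly_AP: "poly (AP a b n) x = Aco a b n x"
  by (simp add: AP_def Aco_def poly_prod algebra_simps)

lemma Aco_conv_ne:
  assumes a: "a \<noteq> 0"
  shows "(\<Sum>k\<le>n. Aco a b k x * Aco a b (n-k) y) = Aco a b n (x+y)"
proof (induction n arbitrary: x y)
  case 0 then show ?case by simp
next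
  case (Suc m)
  define D where "D z = (\<Sum>k\<le>Suc m. Aco a b k z * Aco a b (Suc m - k) y) - Aco a b (Suc m) (z+y)" for z
  have Dsh: "D z = D (z - a)" for z
  proof -
    have "(\<Sum>k\<le>Suc m. Aco a b k z * Aco a b (Suc m - k) y) - (\<Sum>k\<le>Suc m. Aco a b k (z-a) * Aco a b (Suc m - k) y)
        = (\<Sum>k\<le>Suc m. (Aco a b k z - Aco a b k (z-a)) * Aco a b (Suc m - k) y)"
      by (simp add: sum_subtractf algebra_simps)
    also have "\<dots> = (\<Sum>k\<le>m. (Aco a b (Suc k) z - Aco a b (Suc k) (z-a)) * Aco a b (m - k) y)"
      by (subst sum.atMost_Suc_shift) simp
    also have "\<dots> = a * (\<Sum>k\<le>m. Aco a b k (z + b - a) * Aco a b (m - k) y)"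
      by (simp add: Aco_diff sum_distrib_left algebra_simps)
    also have "\<dots> = a * Aco a b m (z + b - a + y)"
      using Suc.IH by simp
    also have "\<dots> = Aco a b (Suc m) (z + y) - Aco a b (Suc m) ((z + y) - a)"
      using Aco_diff[of a b m "z+y"] by (simp add: algebra_simps)
    finally show ?thesis unfolding D_def by (simp add: algebra_simps)
  qed
  have D0: "D 0 = 0"
    unfolding D_def by (subst sum.atMost_Suc_shift) (simp add: Aco_at0)
  have Dj: "D (- (of_nat j * a)) = 0" for j :: nat
  proof (induction j)
    case 0 then show ?case using D0 by simp
  next
    case (Suc j)
    have "D (- (of_nat (Suc j) * a)) = D (- (of_nat j * a))"
    proof -
      have "- (of_nat (Suc j) * a) = - (of_nat j * a) - a" by (simp add: algebra_simps)
      then show ?thesis using Dsh[of "- (of_nat j * a)"] by simp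
    qed
    then show ?case using Suc.IH by simp
  qed
  define P where "P = (\<Sum>k\<le>Suc m. smult (Aco a b (Suc m - k) y) (AP a b k)) - pcompose (AP a b (Suc m)) [:y,1:]"
  have DP: "D z = poly P z" for z
    unfolding D_def P_def by (simp add: poly_sum poly_AP poly_pcompose algebra_simps)
  have "P = 0"
  proof (rule ccontr)
    assume "P \<noteq> 0"
    then have fin: "finite {z. poly P z = 0}" by (rule poly_roots_finite)
    have "range (\<lambda>j::nat. - (of_nat j * a)) \<subseteq> {z. poly P z = 0}"
      using Dj DP by auto
    moreover have "infinite (range (\<lambda>j::nat. - (of_nat j * a)))"
      by (rule range_inj_infinite) (simp add: inj_def a)
    ultimately show False using fin finite_subset by blast
  qed
  then have "D x = 0" using DP by simp
  then show ?case unfolding D_def by simp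
qed

lemma Aco_cont: "continuous_on UNIV (\<lambda>t. Aco t b n x)"
  by (cases "n = 0") (simp_all add: Aco_def continuous_on_const, intro continuous_intros, simp)

lemma Aco_conv: "(\<Sum>k\<le>n. Aco a b k x * Aco a b (n-k) y) = Aco a b n (x+y)"
proof (cases "a = 0")
  case False then show ?thesis by (rule Aco_conv_ne)
next
  case True
  define f where "f t = (\<Sum>k\<le>n. Aco t b k x * Aco t b (n-k) y) - Aco t b n (x+y)" for t
  have fc: "continuous_on UNIV f"
    unfolding f_def by (intro continuous_intros Aco_cont)
  then have l1: "(f \<longlongrightarrow> f 0) (at 0)"
    by (simp add: continuous_on_def)
  have ev: "eventually (\<lambda>t. f t = 0) (at (0::complex))"
    unfolding eventually_at_filter by (rule always_eventually) (simp add: f_def Aco_conv_ne)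
  have l2: "(f \<longlongrightarrow> 0) (at 0)"
    using ev by (rule tendsto_eventually)
  have "f 0 = 0" using tendsto_unique[OF at_neq_bot l1 l2] .
  then show ?thesis using True unfolding f_def by simp
qed

definition Gs :: "complex \<Rightarrow> complex \<Rightarrow> complex \<Rightarrow> complex fps" where
  "Gs a b c = Abs_fps (\<lambda>n. Aco a b n c)"

lemma Gs_mult: "Gs a b c * Gs a b d = Gs a b (c + d)"
  by (rule fps_ext) (simp add: Gs_def fps_mult_nth atLeast0AtMost Aco_conv)

lemma Gs_0: "Gs a b 0 = 1"
  by (rule fps_ext) (simp add: Gs_def Aco_at0)

lemma Gs_nat: "Gs a b (of_nat m) = (Gs a b 1) ^ m"
proof (induction m)
  case 0 then show ?case by (simp add: Gs_0)
next
  case (Suc m)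
  have "Gs a b (of_nat (Suc m)) = Gs a b (of_nat m) * Gs a b 1"
    by (simp add: Gs_mult add.commute)
  then show ?case using Suc.IH by (simp add: mult.commute)
qed

lemma log_0: "F $ 0 = 1 \<Longrightarrow> fps_log F $ 0 = 0"
  by (simp add: fps_log_def)

lemma exp_log: assumes "F $ 0 = 1" shows "fps_exp 1 oo fps_log F = F"
proof -
  have "(fps_exp 1 - 1) oo fps_ln 1 = (fps_X :: complex fps)"
    using fps_inv_fps_exp_compose(2)[of "1::complex"] fps_ln_fps_exp_inv[of "1::complex"] by simp
  then have e: "fps_exp 1 oo fps_ln 1 = fps_X + (1 :: complex fps)"
    by (simp add: fps_compose_sub_distrib algebra_simps)
  have "fps_exp 1 oo fps_log F = (fps_exp 1 oo fps_ln 1) oo (F - 1)"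
    unfolding fps_log_def using assms by (subst fps_compose_assoc) simp_all
  also have "\<dots> = F" unfolding e using assms
    by (simp add: fps_compose_add_distrib)
  finally show ?thesis .
qed

lemma cpow_nat: assumes "F $ 0 = 1" shows "fps_cpow F (of_nat m) = F ^ m"
proof -
  define L where "L = fps_log F"
  have L0: "L $ 0 = 0" using assms by (simp add: L_def log_0)
  have "(fps_const (of_nat m) * fps_X) oo L = fps_const (of_nat m) * L"
    using L0 by (simp add: fps_compose_mult_distrib)
  then have "fps_cpow F (of_nat m) = fps_exp 1 oo ((fps_const (of_nat m) * fps_X) oo L)"
    by (simp add: fps_cpow_def fps_expo_def L_def)
  also have "\<dots> = (fps_exp 1 oo (fps_const (of_nat m) * fps_X)) oo L"
    using L0 by (subst fps_compose_assoc) simp_all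
  also have "\<dots> = (fps_exp 1) ^ m oo L"
    by (simp add: fps_exp_power_mult)
  also have "\<dots> = (fps_exp 1 oo L) ^ m"
    using L0 by (simp add: fps_compose_power)
  also have "\<dots> = F ^ m" using exp_log[OF assms] by (simp add: L_def)
  finally show ?thesis .
qed

lemma cpow_poly: "fps_cpow F c $ n = poly (\<Sum>i=0..n. monom ((fps_log F ^ i $ n) / fact i) i) c"
proof -
  have "(fps_const c * fps_log F) ^ i $ n = c ^ i * (fps_log F ^ i $ n)" for i
    by (simp add: power_mult_distrib fps_const_power)
  then show ?thesis
    by (simp add: fps_cpow_def fps_expo_def fps_compose_nth poly_sum poly_monom algebra_simps)
qed

lemma prod_shift1: "(\<Prod>g=1..N. f g) = (\<Prod>g<N. f (Suc g))"
  by (simp only: One_nat_def prod.atLeast1_atMost_eq)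

lemma master_nth: "n \<noteq> 0 \<Longrightarrow> n \<noteq> 1 \<Longrightarrow>
   master m a b $ n = (\<Prod>g<n-1. m - a * of_nat (Suc g) + b * of_nat n) / fact n"
  unfolding master_def fps_nth_Abs_fps prod_shift1 by (simp only: if_False of_nat_fact)

lemma Gs_nth: "n \<noteq> 0 \<Longrightarrow>
   Gs a b c $ n = c * (\<Prod>g<n-1. c + b * of_nat n - a * of_nat (Suc g)) / fact n"
  unfolding Gs_def Aco_def fps_nth_Abs_fps by (simp only: if_False)

lemma master_eq: "master 1 a b = Gs a b 1"
proof (rule fps_ext)
  fix n :: nat
  show "master 1 a b $ n = Gs a b 1 $ n"
  proof (cases "n = 0 \<or> n = 1")
    case True then show ?thesis by (auto simp add: master_def Gs_def Aco_def)
  next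
    case False
    then have n0: "n \<noteq> 0" "n \<noteq> 1" by auto
    show ?thesis unfolding master_nth[OF n0] Gs_nth[OF n0(1)]
      by (simp only: mult_1) (intro arg_cong[where f="\<lambda>x. x / fact n"] prod.cong refl, simp add: algebra_simps)
  qed
qed

lemma master_lin_eq: assumes c: "c \<noteq> 0"
  shows "master 1 (a / c) (b / c) oo (fps_const c * fps_X) = Gs a b c"
proof (rule fps_ext)
  fix n :: nat
  show "(master 1 (a / c) (b / c) oo (fps_const c * fps_X)) $ n = Gs a b c $ n"
  proof (cases "n = 0 \<or> n = 1")
    case True then show ?thesis by (auto simp add: master_def Gs_def Aco_def)
  next
    case False
    then have n0: "n \<noteq> 0" "n \<noteq> 1" by auto
    then obtain j where j: "n = Suc (Suc j)" by (metis One_nat_def not0_implies_Suc)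
    have "c ^ n * (\<Prod>g<n-1. 1 - a / c * of_nat (Suc g) + b / c * of_nat n)
       = c * (c ^ (n-1) * (\<Prod>g<n-1. 1 - a / c * of_nat (Suc g) + b / c * of_nat n))"
      using j by simp
    also have "c ^ (n-1) * (\<Prod>g<n-1. 1 - a / c * of_nat (Suc g) + b / c * of_nat n)
            = (\<Prod>g<n-1. c * (1 - a / c * of_nat (Suc g) + b / c * of_nat n))"
      by (simp add: prod.distrib)
    also have "\<dots> = (\<Prod>g<n-1. c + b * of_nat n - a * of_nat (Suc g))"
      using c by (intro prod.cong refl) (simp add: field_simps)
    finally have e: "c ^ n * (\<Prod>g<n-1. 1 - a / c * of_nat (Suc g) + b / c * of_nat n)
       = c * (\<Prod>g<n-1. c + b * of_nat n - a * of_nat (Suc g))" .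
    show ?thesis unfolding fps_nth_compose_linear master_nth[OF n0] Gs_nth[OF n0(1)]
      by (simp only: times_divide_eq_right e)
  qed
qed

theorem mainTheorem5:
  fixes a b c :: complex
  assumes "c \<noteq> 0"
  shows "fps_cpow (master 1 a b) c = master 1 (a / c) (b / c) oo (fps_const c * fps_X)"
proof -
  define F where "F = Gs a b 1"
  have F0: "F $ 0 = 1" by (simp add: F_def Gs_def)
  have "fps_cpow F c = Gs a b c"
  proof (rule fps_ext)
    fix n :: nat
    define p where "p = (\<Sum>i=0..n. monom ((fps_log F ^ i $ n) / fact i) i) - AP a b n"
    have roots: "poly p (of_nat m) = 0" for m :: nat
    proof -
      have "poly p (of_nat m) = fps_cpow F (of_nat m) $ n - Aco a b n (of_nat m)"
        unfolding p_def by (simp add: cpow_poly poly_AP)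
      also have "fps_cpow F (of_nat m) $ n = Gs a b (of_nat m) $ n"
        using cpow_nat[OF F0, of m] Gs_nat[of a b m] unfolding F_def by simp
      also have "Gs a b (of_nat m) $ n - Aco a b n (of_nat m) = 0"
        by (simp add: Gs_def)
      finally show ?thesis .
    qed
    have "p = 0"
    proof (rule ccontr)
      assume "p \<noteq> 0"
      then have fin: "finite {z. poly p z = 0}" by (rule poly_roots_finite)
      have "range (of_nat :: nat \<Rightarrow> complex) \<subseteq> {z. poly p z = 0}"
        using roots by auto
      moreover have "infinite (range (of_nat :: nat \<Rightarrow> complex))"
        by (rule range_inj_infinite) (simp add: inj_def)
      ultimately show False using fin finite_subset by blast
    qed
    then have "poly p c = 0" by simp
    then show "fps_cpow F c $ n = Gs a b c $ n"
      unfolding p_def by (simp add: cpow_poly poly_AP Gs_def)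
  qed
  then show ?thesis using master_eq master_lin_eq[OF assms] by (simp add: F_def)
qed

end
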